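(* Let $z\in\mathbb{C}$ with $\mathrm{Re}(z)>0$ and $z\neq1$. (1) For $q>2$, $$\zeta_E(z,q)=\frac{(q-2)^{1-z}-(q-1)^{1-z}}{2(z-1)}-\frac1{\Gamma(z)}\sum_{k=1}^\infty\frac{2^k\,\Gamma(z+k)}{(k+1)!}\,\zeta_E(z+k,q).$$ (2) For $q>1$, $$\zeta_E(z,q)=\frac{(q-1)^{1-z}-q^{1-z}}{2(z-1)}-\frac1{\Gamma(z)}\sum_{k=1}^\infty\frac{\Gamma(z+2k)}{(2k+1)!}\,\zeta_E(z+2k,q).$$
   Context: For $q>0$, $\zeta_E(z,q)=\sum_{n=0}^\infty (-1)^n (n+q)^{-z}$ for $\mathrm{Re}(z)>0$, extended by analytic continuation to an entire function of $z$. *)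

theory Defs
  imports "HOL-Analysis.Analysis"
begin

text \<open>Alternating Hurwitz (Euler) zeta function, defined by its series
  zeta_E(z,q) = sum_{n>=0} (-1)^n (n+q)^(-z), which converges for Re z > 0
  and q > 0.  Only this half-plane is used in the statement below.\<close>
definition euler_hurwitz_zeta :: "complex \<Rightarrow> real \<Rightarrow> complex" where
  "euler_hurwitz_zeta z q =
     (\<Sum>n. (-1) ^ n * (complex_of_real (real n + q)) powr (- z))"

end

theory Submission
  imports Defs
begin


no_notation Infinite_Sum.abs_summable_on (infixr \<open>abs'_summable'_on\<close> 46)

lemma fub:
  fixes z :: complex and q :: real and d :: "nat \<Rightarrow> complex" and m :: "nat \<Rightarrow> nat"
  assumes z: "Re z > 0" and q: "q > 0" and m: "\<And>k. m k \<ge> 1"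
    and sd: "summable (\<lambda>k. norm (d k) * q powr (- real (m k)))"
  shows "summable (\<lambda>k. d k * euler_hurwitz_zeta (z + of_nat (m k)) q) \<and>
    (\<lambda>n. (-1)^n * (\<Sum>k. d k * complex_of_real (real n + q) powr (- (z + of_nat (m k)))))
      sums (\<Sum>k. d k * euler_hurwitz_zeta (z + of_nat (m k)) q)"
proof -
  define F where "F = (\<lambda>n k. (-1)^n * d k * complex_of_real (real n + q) powr (- (z + of_nat (m k))))"
  define A where "A = (\<lambda>n::nat. (real n + q) powr (- (Re z + 1)))"
  define B where "B = (\<lambda>k. norm (d k) * q powr (- real (m k)) * q)"
  have A0: "A n \<ge> 0" for n unfolding A_def by simp
  have B0: "B k \<ge> 0" for k unfolding B_def using q by simp
  have sB: "summable B" unfolding B_def using summable_mult2[OF sd] by simp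
  have sA: "summable A"
  proof -
    have "summable (\<lambda>n. real n powr (- (Re z + 1)))"
      using z by (subst summable_real_powr_iff) simp
    then show ?thesis
    proof (rule summable_comparison_test'[where N=1])
      fix n :: nat assume "n \<ge> 1"
      then show "norm (A n) \<le> real n powr (- (Re z + 1))"
        unfolding A_def using q z by (auto intro!: powr_mono2')
    qed
  qed
  have bound: "norm (F n k) \<le> A n * B k" for n k
  proof -
    have xq: "real n + q \<ge> q" by simp
    have eq1: "norm (F n k) = norm (d k) * (real n + q) powr (- (Re z + real (m k)))"
      unfolding F_def using q by (simp add: norm_mult norm_power norm_powr_real_powr)
    have "(real n + q) powr (- (Re z + real (m k))) =
        (real n + q) powr (- (Re z + 1)) * (real n + q) powr (- (real (m k) - 1))"
      by (simp add: powr_add[symmetric])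
    also have "\<dots> \<le> (real n + q) powr (- (Re z + 1)) * q powr (- (real (m k) - 1))"
      using m[of k] q by (intro mult_left_mono powr_mono2') auto
    also have "q powr (- (real (m k) - 1)) = q powr (- real (m k)) * q"
      using q by (simp add: powr_diff powr_minus divide_inverse)
    finally have "(real n + q) powr (- (Re z + real (m k))) \<le> A n * (q powr (- real (m k)) * q)"
      unfolding A_def .
    then have "norm (d k) * (real n + q) powr (- (Re z + real (m k))) \<le> norm (d k) * (A n * (q powr (- real (m k)) * q))"
      by (rule mult_left_mono) simp
    then show ?thesis unfolding B_def eq1 by (simp add: mult_ac)
  qed
  have G: "(\<lambda>(n,k). A n * B k) abs_summable_on UNIV \<times> UNIV"
  proof (subst abs_summable_on_Sigma_iff, simp, simp, intro conjI ballI)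
    fix n :: nat
    show "(\<lambda>k. case (n, k) of (n, k) \<Rightarrow> A n * B k) abs_summable_on UNIV"
      using A0 B0 summable_mult[OF sB, of "A n"] by (simp add: abs_summable_on_nat_iff' abs_mult)
  next
    have eqf: "(\<lambda>n. infsetsum (\<lambda>k. norm (A n * B k)) UNIV) = (\<lambda>n. A n * infsetsum B UNIV)"
    proof
      fix n
      have "infsetsum (\<lambda>k. norm (A n * B k)) UNIV = infsetsum (\<lambda>k. A n * B k) UNIV"
        using A0 B0 by (simp add: abs_mult)
      also have "\<dots> = A n * infsetsum B UNIV"
        using sB B0 by (intro infsetsum_cmult_right) (simp add: abs_summable_on_nat_iff')
      finally show "infsetsum (\<lambda>k. norm (A n * B k)) UNIV = A n * infsetsum B UNIV" .
    qed
    have AB: "(\<lambda>n. A n * infsetsum B UNIV) abs_summable_on UNIV"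
      using summable_mult2[OF sA, of "\<bar>infsetsum B UNIV\<bar>"] A0
      by (simp add: abs_summable_on_nat_iff' abs_mult)
    have "(\<lambda>n. infsetsum (\<lambda>k. norm (A n * B k)) UNIV) abs_summable_on UNIV"
      using AB by (subst eqf)
    then show "(\<lambda>n. infsetsum (\<lambda>k. norm (case (n, k) of (n, k) \<Rightarrow> A n * B k)) UNIV) abs_summable_on UNIV"
      by (simp only: case_prod_conv)
  qed
  have FS: "(\<lambda>(n,k). F n k) abs_summable_on UNIV \<times> UNIV"
    by (rule abs_summable_on_comparison_test'[OF G]) (use bound A0 B0 in auto)
  have FS': "(\<lambda>(k,n). F n k) abs_summable_on UNIV \<times> UNIV"
    using FS by (subst abs_summable_on_Times_swap) auto
  have P1: "(\<lambda>n. infsetsum (\<lambda>k. F n k) UNIV) abs_summable_on UNIV"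
    using abs_summable_on_Sigma_project1'[OF FS] by simp
  have P2: "(\<lambda>k. infsetsum (\<lambda>n. F n k) UNIV) abs_summable_on UNIV"
    using abs_summable_on_Sigma_project1'[OF FS'] by simp
  have rowk: "(\<lambda>n. F n k) abs_summable_on UNIV" for k
    using abs_summable_on_Sigma_project2[OF FS', of k] by simp
  have rown: "(\<lambda>k. F n k) abs_summable_on UNIV" for n
    using abs_summable_on_Sigma_project2[OF FS, of n] by simp
  have e1: "infsetsum (\<lambda>n. F n k) UNIV = d k * euler_hurwitz_zeta (z + of_nat (m k)) q" for k
  proof -
    have "infsetsum (\<lambda>n. F n k) UNIV = (\<Sum>n. F n k)"
      by (rule infsetsum_nat'[OF rowk])
    also have "\<dots> = (\<Sum>n. d k * ((-1)^n * complex_of_real (real n + q) powr (- (z + of_nat (m k)))))"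
      unfolding F_def by (intro suminf_cong) (simp only: mult.assoc mult.left_commute)
    also have "\<dots> = d k * euler_hurwitz_zeta (z + of_nat (m k)) q"
    proof (cases "d k = 0")
      case False
      have eqF: "(\<lambda>n. F n k) = (\<lambda>n. d k * ((-1)^n * complex_of_real (real n + q) powr (- (z + of_nat (m k)))))"
        unfolding F_def by (intro ext) (simp only: mult.assoc mult.left_commute)
      have "summable (\<lambda>n. d k * ((-1)^n * complex_of_real (real n + q) powr (- (z + of_nat (m k)))))"
        using rowk[of k] unfolding eqF abs_summable_on_nat_iff' by (rule summable_norm_cancel)
      then have "summable (\<lambda>n. ((-1)^n * complex_of_real (real n + q) powr (- (z + of_nat (m k)))))"
        using False by (simp only: summable_cmult_iff) simp
      from suminf_mult[OF this, of "d k"] show ?thesis unfolding euler_hurwitz_zeta_def .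
    qed simp
    finally show ?thesis .
  qed
  have e2: "infsetsum (\<lambda>k. F n k) UNIV = (-1)^n * (\<Sum>k. d k * complex_of_real (real n + q) powr (- (z + of_nat (m k))))" for n
  proof -
    have "infsetsum (\<lambda>k. F n k) UNIV = (\<Sum>k. F n k)"
      by (rule infsetsum_nat'[OF rown])
    also have "\<dots> = (\<Sum>k. (-1)^n * (d k * complex_of_real (real n + q) powr (- (z + of_nat (m k)))))"
      unfolding F_def by (intro suminf_cong) (simp only: mult.assoc mult.left_commute)
    also have "\<dots> = (-1)^n * (\<Sum>k. d k * complex_of_real (real n + q) powr (- (z + of_nat (m k))))"
    proof -
      have eqF: "(\<lambda>k. F n k) = (\<lambda>k. (-1)^n * (d k * complex_of_real (real n + q) powr (- (z + of_nat (m k)))))"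
        unfolding F_def by (intro ext) (simp only: mult.assoc mult.left_commute)
      have "summable (\<lambda>k. (-1)^n * (d k * complex_of_real (real n + q) powr (- (z + of_nat (m k)))))"
        using rown[of n] unfolding eqF abs_summable_on_nat_iff' by (rule summable_norm_cancel)
      then have "summable (\<lambda>k. (-1)^n * ((-1)^n * (d k * complex_of_real (real n + q) powr (- (z + of_nat (m k))))))"
        by (rule summable_mult)
      then have sm: "summable (\<lambda>k. d k * complex_of_real (real n + q) powr (- (z + of_nat (m k))))"
        by (simp only: mult.assoc[symmetric] power_mult_distrib[symmetric]) simp
      from suminf_mult[OF sm, of "(-1)^n"] show ?thesis .
    qed
    finally show ?thesis .
  qed
  have swap: "infsetsum (\<lambda>n. infsetsum (\<lambda>k. F n k) UNIV) UNIV = infsetsum (\<lambda>k. infsetsum (\<lambda>n. F n k) UNIV) UNIV"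
    by (rule infsetsum_swap) (use FS in auto)
  have s1: "(\<lambda>n. infsetsum (\<lambda>k. F n k) UNIV) sums infsetsum (\<lambda>n. infsetsum (\<lambda>k. F n k) UNIV) UNIV"
    by (rule sums_infsetsum_nat'[OF P1])
  have s2: "(\<lambda>k. infsetsum (\<lambda>n. F n k) UNIV) sums infsetsum (\<lambda>k. infsetsum (\<lambda>n. F n k) UNIV) UNIV"
    by (rule sums_infsetsum_nat'[OF P2])
  from s2 have "summable (\<lambda>k. d k * euler_hurwitz_zeta (z + of_nat (m k)) q)"
    and v: "(\<Sum>k. d k * euler_hurwitz_zeta (z + of_nat (m k)) q) = infsetsum (\<lambda>k. infsetsum (\<lambda>n. F n k) UNIV) UNIV"
    by (auto simp: e1 sums_iff)
  moreover have "(\<lambda>n. (-1)^n * (\<Sum>k. d k * complex_of_real (real n + q) powr (- (z + of_nat (m k)))))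
      sums (\<Sum>k. d k * euler_hurwitz_zeta (z + of_nat (m k)) q)"
    using s1[unfolded swap] unfolding e2 v[symmetric] .
  ultimately show ?thesis by blast
qed



lemma binom_expand:
  fixes a :: complex and x t :: real
  assumes x: "x > 0" and t: "\<bar>t\<bar> < x"
  shows "(\<lambda>j. (a gchoose j) * of_real t ^ j * of_real x powr (a - of_nat j)) sums (of_real (x+t) powr a)"
proof -
  define w where "w = complex_of_real (t/x)"
  have "norm w < 1" using x t by (simp add: w_def norm_divide divide_less_eq)
  from gen_binomial_complex[OF this, of a]
  have "(\<lambda>j. (a gchoose j) * w^j) sums (1+w) powr a" .
  then have "(\<lambda>j. (a gchoose j) * w^j * of_real x powr a) sums ((1+w) powr a * of_real x powr a)"
    by (rule sums_mult2)
  moreover have "(1+w) powr a * of_real x powr a = of_real (x+t) powr a"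
  proof -
    have "1 + t/x > 0" using x t by (simp add: field_simps abs_less_iff)
    have "complex_of_real (x+t) = of_real x * of_real (1 + t/x)"
      using x by (simp add: field_simps)
    also have "\<dots> powr a = of_real x powr a * of_real (1 + t/x) powr a"
      using x \<open>1 + t/x > 0\<close> by (intro powr_times_real) auto
    finally show ?thesis by (simp add: w_def mult.commute)
  qed
  moreover have "(a gchoose j) * w^j * of_real x powr a =
      (a gchoose j) * of_real t ^ j * of_real x powr (a - of_nat j)" for j
  proof -
    have xn: "complex_of_real x \<noteq> 0" using x by simp
    have "of_real x powr (a - of_nat j) = of_real x powr a / of_real x ^ j"
      using xn by (simp add: powr_diff)
    moreover have "w ^ j = of_real t ^ j / of_real x ^ j"
      by (simp add: w_def power_divide)
    ultimately show ?thesis by simp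
  qed
  ultimately show ?thesis by simp
qed

lemma tele:
  fixes a :: complex and c :: real
  assumes c: "c > 0" and a: "Re a < 1"
  shows "(\<lambda>n. (-1)^n * (of_real (real n + c) powr a - of_real (real n + c + 2) powr a))
           sums (of_real c powr a - of_real (c+1) powr a)"
proof -
  define u where "u = (\<lambda>n::nat. complex_of_real (real n + c) powr a)"
  have u2: "complex_of_real (real n + c + 2) powr a = u (n+2)" for n
    by (simp add: u_def add_ac)
  have ps: "(\<Sum>i<N. (-1)^i * (u i - u (i+2))) = u 0 - u 1 - (-1)^N * (u N - u (Suc N))" for N
    by (induction N) (simp_all add: algebra_simps)
  have bnd: "norm (u N - u (Suc N)) \<le> norm a * (real N + c) powr (Re a - 1)" for N
  proof -
    define S where "S = closed_segment (complex_of_real (real N + c)) (of_real (real N + c + 1))"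
    have S: "S = of_real ` {real N + c .. real N + c + 1}"
      unfolding S_def by (subst closed_segment_of_real) (simp add: closed_segment_eq_real_ivl)
    have "norm ((\<lambda>w. w powr a) (of_real (real N + c)) - (\<lambda>w. w powr a) (of_real (real N + c + 1)))
        \<le> (norm a * (real N + c) powr (Re a - 1)) * norm (complex_of_real (real N + c) - of_real (real N + c + 1))"
    proof (rule field_differentiable_bound[where f' = "\<lambda>w. a * w powr (a-1)" and S = S])
      show "convex S" unfolding S_def by (rule convex_closed_segment)
    next
      fix w assume "w \<in> S"
      then obtain s where s: "s \<ge> real N + c" "w = of_real s" unfolding S by auto
      have "s > 0" using s c by linarith
      then have "w \<notin> \<real>\<^sub>\<le>\<^sub>0" using s by (auto simp: complex_nonpos_Reals_iff)
      then show "((\<lambda>w. w powr a) has_field_derivative a * w powr (a - 1)) (at w within S)"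
        by (rule has_field_derivative_at_within[OF has_field_derivative_powr])
      have "norm (a * w powr (a - 1)) = norm a * s powr (Re a - 1)"
        using \<open>s > 0\<close> s by (simp add: norm_mult norm_powr_real_powr)
      also have "\<dots> \<le> norm a * (real N + c) powr (Re a - 1)"
        using a s c by (intro mult_left_mono powr_mono2') auto
      finally show "norm (a * w powr (a - 1)) \<le> norm a * (real N + c) powr (Re a - 1)" .
    next
      show "complex_of_real (real N + c) \<in> S" "complex_of_real (real N + c + 1) \<in> S"
        unfolding S_def by (rule ends_in_segment)+
    qed
    then show ?thesis by (simp add: u_def add_ac)
  qed
  have lim0: "(\<lambda>N. (-1)^N * (u N - u (Suc N))) \<longlonglongrightarrow> 0"
  proof (rule Lim_null_comparison[where g="\<lambda>N. norm a * (real N + c) powr (Re a - 1)"])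
    show "\<forall>\<^sub>F N in sequentially. norm ((-1)^N * (u N - u (Suc N))) \<le> norm a * (real N + c) powr (Re a - 1)"
      using bnd by (simp add: norm_mult norm_power)
    have "filterlim (\<lambda>N. c + real N) at_top sequentially"
      by (rule filterlim_tendsto_add_at_top[OF tendsto_const filterlim_real_sequentially])
    then have "filterlim (\<lambda>N. real N + c) at_top sequentially" by (simp add: add.commute)
    then have "((\<lambda>N. (real N + c) powr (Re a - 1)) \<longlongrightarrow> 0) sequentially"
      using a by (intro tendsto_neg_powr) auto
    then show "(\<lambda>N. norm a * (real N + c) powr (Re a - 1)) \<longlonglongrightarrow> 0"
      by (rule tendsto_mult_right_zero)
  qed
  have "(\<lambda>N. u 0 - u 1 - (-1)^N * (u N - u (Suc N))) \<longlonglongrightarrow> u 0 - u 1 - 0"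
    by (intro tendsto_intros lim0)
  then have "(\<lambda>n. (-1)^n * (u n - u (n+2))) sums (u 0 - u 1)"
    unfolding sums_def ps by simp
  then show ?thesis unfolding u2 by (simp add: u_def add.commute)
qed



lemma aux_alg: fixes s A D X S :: complex shows "S = A / D - X \<Longrightarrow> s * A / D - s * S = s * X"
  by (simp add: right_diff_distrib)

lemma assemble:
  fixes z :: complex and q c0 :: real and d cc :: "nat \<Rightarrow> complex" and m :: "nat \<Rightarrow> nat"
  assumes z: "Re z > 0" "z \<noteq> 1" and q: "q > 0" and c0: "c0 > 0" and m: "\<And>k. m k \<ge> 1"
    and sd: "summable (\<lambda>k. norm (d k) * q powr (- real (m k)))"
    and per: "\<And>n::nat. (\<lambda>k. d k * complex_of_real (real n + q) powr (- (z + of_nat (m k)))) sums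
       ((complex_of_real (real n + c0) powr (1 - z) - complex_of_real (real n + c0 + 2) powr (1 - z)) / (2 * (z - 1))
        - complex_of_real (real n + q) powr (- z))"
    and cg: "\<And>k. d k = cc k / Gamma z"
  shows "summable (\<lambda>k. cc k * euler_hurwitz_zeta (z + of_nat (m k)) q) \<and>
    euler_hurwitz_zeta z q = (complex_of_real c0 powr (1 - z) - complex_of_real (c0 + 1) powr (1 - z)) / (2 * (z - 1))
      - (1 / Gamma z) * (\<Sum>k. cc k * euler_hurwitz_zeta (z + of_nat (m k)) q)"
proof -
  define Z where "Z = (\<lambda>k. euler_hurwitz_zeta (z + of_nat (m k)) q)"
  have G: "Gamma z \<noteq> 0"
    using z by (auto simp: Gamma_eq_zero_iff nonpos_Ints_def)
  note F = fub[OF z(1) q m sd]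
  have sdZ: "summable (\<lambda>k. d k * Z k)" using F by (simp add: Z_def)
  have R: "(\<lambda>n. (-1)^n * (\<Sum>k. d k * complex_of_real (real n + q) powr (- (z + of_nat (m k))))) sums (\<Sum>k. d k * Z k)"
    using F by (simp add: Z_def)
  have T: "(\<lambda>n. (-1)^n * (complex_of_real (real n + c0) powr (1 - z) - complex_of_real (real n + c0 + 2) powr (1 - z)))
      sums (complex_of_real c0 powr (1 - z) - complex_of_real (c0 + 1) powr (1 - z))"
    using tele[OF c0, of "1 - z"] z by simp
  have T': "(\<lambda>n. (-1)^n * (complex_of_real (real n + c0) powr (1 - z) - complex_of_real (real n + c0 + 2) powr (1 - z)) / (2 * (z - 1)))
      sums ((complex_of_real c0 powr (1 - z) - complex_of_real (c0 + 1) powr (1 - z)) / (2 * (z - 1)))"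
    by (rule sums_divide[OF T])
  have "(\<lambda>n. (-1)^n * (complex_of_real (real n + c0) powr (1 - z) - complex_of_real (real n + c0 + 2) powr (1 - z)) / (2 * (z - 1))
         - (-1)^n * (\<Sum>k. d k * complex_of_real (real n + q) powr (- (z + of_nat (m k)))))
      sums ((complex_of_real c0 powr (1 - z) - complex_of_real (c0 + 1) powr (1 - z)) / (2 * (z - 1)) - (\<Sum>k. d k * Z k))"
    by (rule sums_diff[OF T' R])
  also have "(\<lambda>n. (-1)^n * (complex_of_real (real n + c0) powr (1 - z) - complex_of_real (real n + c0 + 2) powr (1 - z)) / (2 * (z - 1))
         - (-1)^n * (\<Sum>k. d k * complex_of_real (real n + q) powr (- (z + of_nat (m k)))))
     = (\<lambda>n. (-1)^n * complex_of_real (real n + q) powr (- z))"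
  proof
    fix n :: nat
    have "(\<Sum>k. d k * complex_of_real (real n + q) powr (- (z + of_nat (m k)))) =
       (complex_of_real (real n + c0) powr (1 - z) - complex_of_real (real n + c0 + 2) powr (1 - z)) / (2 * (z - 1))
        - complex_of_real (real n + q) powr (- z)"
      using per[of n] by (rule sums_unique[symmetric])
    then show "(-1)^n * (complex_of_real (real n + c0) powr (1 - z) - complex_of_real (real n + c0 + 2) powr (1 - z)) / (2 * (z - 1))
         - (-1)^n * (\<Sum>k. d k * complex_of_real (real n + q) powr (- (z + of_nat (m k))))
         = (-1)^n * complex_of_real (real n + q) powr (- z)"
      by (rule aux_alg)
  qed
  finally have E: "euler_hurwitz_zeta z q =
      (complex_of_real c0 powr (1 - z) - complex_of_real (c0 + 1) powr (1 - z)) / (2 * (z - 1)) - (\<Sum>k. d k * Z k)"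
    unfolding euler_hurwitz_zeta_def by (rule sums_unique[symmetric])
  have ccZ: "(\<lambda>k. cc k * Z k) = (\<lambda>k. Gamma z * (d k * Z k))"
    using G by (simp add: cg)
  have s2: "summable (\<lambda>k. cc k * Z k)"
    unfolding ccZ by (rule summable_mult[OF sdZ])
  have "(\<Sum>k. d k * Z k) = (1 / Gamma z) * (\<Sum>k. cc k * Z k)"
  proof -
    have "(\<lambda>k. d k * Z k) = (\<lambda>k. (1 / Gamma z) * (cc k * Z k))" by (simp add: cg)
    then show ?thesis using suminf_mult[OF s2, of "1 / Gamma z"] by simp
  qed
  with E s2 show ?thesis by (simp add: Z_def)
qed

lemma gamma_nz: "Re z > 0 \<Longrightarrow> z \<notin> \<int>\<^sub>\<le>\<^sub>0"
  by (auto simp: nonpos_Ints_def)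

lemma gchoose_Gamma:
  fixes z :: complex
  assumes "Re z > 0"
  shows "((1 - z) gchoose (Suc j)) = (-1)^(Suc j) * (z - 1) * Gamma (z + of_nat j) / (Gamma z * fact (Suc j))"
proof -
  have "((1 - z) gchoose (Suc j)) = (-1)^(Suc j) * pochhammer (z - 1) (Suc j) / fact (Suc j)"
    by (simp add: gbinomial_pochhammer)
  also have "pochhammer (z - 1) (Suc j) = (z - 1) * pochhammer z j"
    by (simp add: pochhammer_rec)
  also have "pochhammer z j = Gamma (z + of_nat j) / Gamma z"
    using assms by (intro pochhammer_Gamma gamma_nz)
  finally show ?thesis by simp
qed

lemma conv_gchoose:
  fixes a :: complex and r :: real
  assumes "0 \<le> r" "r < 1"
  shows "summable (\<lambda>j. norm ((a gchoose j) * complex_of_real r ^ j))"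
proof (rule abs_summable_in_conv_radius)
  show "ereal (norm (complex_of_real r)) < conv_radius (\<lambda>j. a gchoose j)"
    using assms by (simp add: conv_radius_gchoose)
qed

lemma sums_SS: fixes f :: "nat \<Rightarrow> complex" shows "f sums L \<Longrightarrow> (\<lambda>k. f (Suc (Suc k))) sums (L - f 0 - f 1)"
proof -
  assume "f sums L"
  then have "(\<lambda>k. f (Suc k)) sums (L - f 0)" using sums_Suc_iff[of f "L - f 0"] by simp
  then show ?thesis using sums_Suc_iff[of "\<lambda>k. f (Suc k)" "L - f 0 - f 1"] by simp
qed

lemma aux_div: fixes w G F X :: complex and k :: nat
  assumes "w \<noteq> 0" "G \<noteq> 0" "F \<noteq> 0"
  shows "2^(k + 1) * w * X / (G * F) / (2 * w) = 2^k * X / F / G"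
  using assms by (simp add: field_simps)

lemma case1:
  fixes z :: complex and q :: real
  assumes z: "Re z > 0" "z \<noteq> 1" and q: "q > 2"
  shows "summable (\<lambda>k. 2 ^ (Suc k) * Gamma (z + of_nat (Suc k)) / fact (Suc k + 1)
                          * euler_hurwitz_zeta (z + of_nat (Suc k)) q) \<and>
           euler_hurwitz_zeta z q =
             (complex_of_real (q - 2) powr (1 - z) - complex_of_real (q - 1) powr (1 - z))
               / (2 * (z - 1))
             - (1 / Gamma z) *
               (\<Sum>k. 2 ^ (Suc k) * Gamma (z + of_nat (Suc k)) / fact (Suc k + 1)
                      * euler_hurwitz_zeta (z + of_nat (Suc k)) q)"
proof -
  define g where "g = (\<lambda>j. (1 - z) gchoose j)"
  define d where "d = (\<lambda>k. g (Suc (Suc k)) * (-2)^(Suc (Suc k)) / (2 * (z - 1)))"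
  define cc where "cc = (\<lambda>k::nat. 2 ^ (Suc k) * Gamma (z + of_nat (Suc k)) / fact (Suc k + 1) :: complex)"
  have z1: "z - 1 \<noteq> 0" using z by simp
  have G: "Gamma z \<noteq> 0" using z by (simp add: Gamma_eq_zero_iff gamma_nz)
  have pm: "(-1::complex)^n * (-2)^n = 2^n" for n
    by (simp add: power_mult_distrib[symmetric])
  have cg: "d k = cc k / Gamma z" for k
  proof -
    have "d k = ((-1)^(Suc (Suc k)) * (-2)^(Suc(Suc k))) * (z - 1) * Gamma (z + of_nat (Suc k)) / (Gamma z * fact (Suc (Suc k))) / (2*(z-1))"
      unfolding d_def g_def gchoose_Gamma[OF z(1)] by (simp add: algebra_simps)
    also have "\<dots> = 2^(Suc (Suc k)) * (z - 1) * Gamma (z + of_nat (Suc k)) / (Gamma z * fact (Suc (Suc k))) / (2*(z-1))"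
      by (simp only: pm)
    also have "\<dots> = cc k / Gamma z"
      unfolding cc_def Suc_eq_plus1[of "Suc k"] by (rule aux_div[OF z1 G fact_nonzero])
    finally show ?thesis .
  qed
  have sd: "summable (\<lambda>k. norm (d k) * q powr (- real (Suc k)))"
  proof -
    have "summable (\<lambda>j. norm (g j * complex_of_real (2/q) ^ j))"
      using q unfolding g_def by (intro conv_gchoose) auto
    then have "summable (\<lambda>k. norm (g (k+2) * complex_of_real (2/q) ^ (k+2)))"
      by (rule summable_ignore_initial_segment)
    then have "summable (\<lambda>k. (q / (2 * norm (z - 1))) * norm (g (k+2) * complex_of_real (2/q) ^ (k+2)))"
      by (rule summable_mult)
    moreover have "norm (d k) * q powr (- real (Suc k)) = (q / (2 * norm (z - 1))) * norm (g (k+2) * complex_of_real (2/q) ^ (k+2))" for k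
    proof -
      have P: "q powr (- real (Suc k)) = 1 / q ^ Suc k"
        using q by (simp only: powr_minus powr_realpow[of q]) (simp_all add: divide_inverse)
      have N2: "norm (2 * (z - 1)) = 2 * norm (z - 1)" by (simp only: norm_mult) simp
      have N3: "norm (complex_of_real (2/q)) = 2/q" using q by (simp only: norm_of_real) simp
      show ?thesis unfolding P d_def norm_mult norm_divide norm_power N2 N3
        using q z1 by (simp add: field_simps)
    qed
    ultimately show ?thesis by simp
  qed
  have per: "(\<lambda>k. d k * complex_of_real (real n + q) powr (- (z + of_nat (Suc k)))) sums
       ((complex_of_real (real n + (q - 2)) powr (1 - z) - complex_of_real (real n + (q - 2) + 2) powr (1 - z)) / (2 * (z - 1))
        - complex_of_real (real n + q) powr (- z))" for n
  proof -
    define x where "x = real n + q"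
    have x: "x > 0" "\<bar>-2\<bar> < x" using q by (auto simp: x_def)
    define s where "s = (\<lambda>j. g j * complex_of_real (-2) ^ j * complex_of_real x powr ((1 - z) - of_nat j))"
    have "s sums (complex_of_real (x + -2) powr (1 - z))"
      unfolding s_def g_def by (rule binom_expand[OF x])
    from sums_SS[OF this]
    have A: "(\<lambda>k. s (Suc (Suc k))) sums (complex_of_real (x + -2) powr (1-z) - s 0 - s 1)" .
    have e: "s (Suc (Suc k)) = (2 * (z-1)) * (d k * complex_of_real x powr (- (z + of_nat (Suc k))))" for k
    proof -
      have ex: "(1 - z) - of_nat (Suc (Suc k)) = - (z + of_nat (Suc k))" by simp
      show ?thesis unfolding s_def d_def ex using z1 by simp
    qed
    have s0: "s 0 = complex_of_real x powr (1 - z)" by (simp add: s_def g_def)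
    have s1: "s 1 = 2 * (z - 1) * complex_of_real x powr (- z)"
      by (simp add: s_def g_def algebra_simps)
    have V: "complex_of_real (x + -2) powr (1-z) - s 0 - s 1 = (2*(z-1)) *
      ((complex_of_real (real n + (q - 2)) powr (1 - z) - complex_of_real (real n + (q - 2) + 2) powr (1 - z)) / (2 * (z - 1))
        - complex_of_real (real n + q) powr (- z))"
    proof -
      have h1: "x + -2 = real n + (q - 2)" and h2: "real n + (q - 2) + 2 = x" by (simp_all add: x_def)
      show ?thesis unfolding s0 s1 h1 h2 using z1 by (simp add: x_def field_simps)
    qed
    have "(\<lambda>k. (2*(z-1)) * (d k * complex_of_real x powr (- (z + of_nat (Suc k))))) sums ((2*(z-1)) *
      ((complex_of_real (real n + (q - 2)) powr (1 - z) - complex_of_real (real n + (q - 2) + 2) powr (1 - z)) / (2 * (z - 1))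
        - complex_of_real (real n + q) powr (- z)))"
      using A unfolding e V .
    then show ?thesis using z1 by (subst (asm) sums_mult_iff) (auto simp: x_def)
  qed
  have q0: "q > 0" and c0: "q - 2 > 0" using q by auto
  have eq: "q - 2 + 1 = q - 1" by simp
  have mm: "\<And>k. 1 \<le> Suc k" by simp
  from assemble[OF z q0 c0 mm sd per cg]
  show ?thesis unfolding eq cc_def by simp
qed

lemma aux_div2: fixes w G F X :: complex
  assumes "w \<noteq> 0" "G \<noteq> 0" "F \<noteq> 0"
  shows "- ((-1) * w * X / (G * F)) / w = X / F / G"
  using assms by (simp add: field_simps)

lemma case2:
  fixes z :: complex and q :: real
  assumes z: "Re z > 0" "z \<noteq> 1" and q: "q > 1"
  shows "summable (\<lambda>k. Gamma (z + of_nat (2 * Suc k)) / fact (2 * Suc k + 1)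
                          * euler_hurwitz_zeta (z + of_nat (2 * Suc k)) q) \<and>
           euler_hurwitz_zeta z q =
             (complex_of_real (q - 1) powr (1 - z) - complex_of_real q powr (1 - z))
               / (2 * (z - 1))
             - (1 / Gamma z) *
               (\<Sum>k. Gamma (z + of_nat (2 * Suc k)) / fact (2 * Suc k + 1)
                      * euler_hurwitz_zeta (z + of_nat (2 * Suc k)) q)"
proof -
  define g where "g = (\<lambda>j. (1 - z) gchoose j)"
  define d where "d = (\<lambda>k. - g (2 * Suc k + 1) / (z - 1))"
  define cc where "cc = (\<lambda>k::nat. Gamma (z + of_nat (2 * Suc k)) / fact (2 * Suc k + 1) :: complex)"
  have z1: "z - 1 \<noteq> 0" using z by simp
  have G: "Gamma z \<noteq> 0" using z by (simp add: Gamma_eq_zero_iff gamma_nz)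
  have cg: "d k = cc k / Gamma z" for k
  proof -
    have j: "2 * Suc k + 1 = Suc (2 * Suc k)" by simp
    have m1: "(-1::complex) ^ Suc (2 * Suc k) = -1" by simp
    have "d k = - ((-1) * (z - 1) * Gamma (z + of_nat (2 * Suc k)) / (Gamma z * fact (Suc (2 * Suc k)))) / (z - 1)"
      unfolding d_def g_def j gchoose_Gamma[OF z(1)] m1 ..
    also have "\<dots> = cc k / Gamma z"
      unfolding cc_def j by (rule aux_div2[OF z1 G fact_nonzero])
    finally show ?thesis .
  qed
  define f where "f = (\<lambda>j. norm (g j * complex_of_real (1/q) ^ j))"
  have sf: "summable f"
    using q unfolding f_def g_def by (intro conv_gchoose) auto
  define gg where "gg = (\<lambda>k::nat. 2 * Suc k + 1)"
  have smg: "strict_mono gg" unfolding gg_def by (rule strict_monoI) simp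
  define f' where "f' = (\<lambda>n. if n \<in> range gg then f n else 0)"
  have sf': "summable f'"
    by (rule summable_comparison_test'[OF sf, of 0]) (simp add: f'_def f_def)
  have "summable (\<lambda>k. f' (gg k))"
    using summable_mono_reindex[OF smg, of f'] sf' by (simp add: f'_def)
  then have sfg: "summable (\<lambda>k. f (2 * Suc k + 1))"
    by (simp add: f'_def gg_def)
  have sd: "summable (\<lambda>k. norm (d k) * q powr (- real (2 * Suc k)))"
  proof -
    have "summable (\<lambda>k. (q / norm (z - 1)) * f (2 * Suc k + 1))"
      by (rule summable_mult[OF sfg])
    moreover have "norm (d k) * q powr (- real (2 * Suc k)) = (q / norm (z - 1)) * f (2 * Suc k + 1)" for k
    proof -
      have P: "q powr (- real (2 * Suc k)) = 1 / q ^ (2 * Suc k)"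
        using q by (simp only: powr_minus powr_realpow[of q]) (simp_all add: divide_inverse)
      have N3: "norm (complex_of_real (1/q)) = 1/q" using q by (simp only: norm_of_real) simp
      show ?thesis unfolding P d_def f_def norm_mult norm_divide norm_power N3 norm_minus_cancel
        using q z1 by (simp add: field_simps)
    qed
    ultimately show ?thesis by simp
  qed
  have per: "(\<lambda>k. d k * complex_of_real (real n + q) powr (- (z + of_nat (2 * Suc k)))) sums
       ((complex_of_real (real n + (q - 1)) powr (1 - z) - complex_of_real (real n + (q - 1) + 2) powr (1 - z)) / (2 * (z - 1))
        - complex_of_real (real n + q) powr (- z))" for n
  proof -
    define x where "x = real n + q"
    have xm: "x > 0" "\<bar>-1\<bar> < x" and xp: "x > 0" "\<bar>1\<bar> < x" using q by (auto simp: x_def)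
    define h where "h = (\<lambda>j. g j * complex_of_real (-1) ^ j * complex_of_real x powr ((1 - z) - of_nat j)
                          - g j * complex_of_real 1 ^ j * complex_of_real x powr ((1 - z) - of_nat j))"
    have hs: "h sums (complex_of_real (x + -1) powr (1 - z) - complex_of_real (x + 1) powr (1 - z))"
      unfolding h_def g_def by (intro sums_diff binom_expand xm xp)
    define ho where "ho = (\<lambda>i::nat. 2 * i + 1)"
    have smo: "strict_mono ho" unfolding ho_def by (rule strict_monoI) simp
    have zero: "h n' = 0" if "n' \<notin> range ho" for n'
    proof -
      have "even n'"
      proof (rule ccontr)
        assume "odd n'"
        then have "n' = ho (n' div 2)" unfolding ho_def by presburger
        then show False using that by auto
      qed
      then show ?thesis by (simp add: h_def)
    qed
    have "(\<lambda>i. h (ho i)) sums (complex_of_real (x + -1) powr (1 - z) - complex_of_real (x + 1) powr (1 - z))"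
      using sums_mono_reindex[OF smo zero] hs by (rule iffD2)
    then have A: "(\<lambda>k. h (2 * Suc k + 1)) sums (complex_of_real (x + -1) powr (1 - z) - complex_of_real (x + 1) powr (1 - z) - h 1)"
      using sums_Suc_iff[of "\<lambda>i. h (ho i)"] by (simp add: ho_def)
    have e: "h (2 * Suc k + 1) = (2 * (z-1)) * (d k * complex_of_real x powr (- (z + of_nat (2 * Suc k))))" for k
    proof -
      have ex: "(1 - z) - of_nat (2 * Suc k + 1) = - (z + of_nat (2 * Suc k))" by simp
      have m1: "complex_of_real (-1) ^ (2 * Suc k + 1) = -1" by simp
      show ?thesis unfolding h_def d_def ex m1 using z1 by (simp add: field_simps)
    qed
    have h1: "h 1 = 2 * (z - 1) * complex_of_real x powr (- z)"
      by (simp add: h_def g_def algebra_simps)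
    have V: "complex_of_real (x + -1) powr (1 - z) - complex_of_real (x + 1) powr (1 - z) - h 1 = (2*(z-1)) *
      ((complex_of_real (real n + (q - 1)) powr (1 - z) - complex_of_real (real n + (q - 1) + 2) powr (1 - z)) / (2 * (z - 1))
        - complex_of_real (real n + q) powr (- z))"
    proof -
      have r1: "x + -1 = real n + (q - 1)" and r2: "real n + (q - 1) + 2 = x + 1" by (simp_all add: x_def)
      show ?thesis unfolding h1 r1 r2 using z1 by (simp add: x_def field_simps)
    qed
    have "(\<lambda>k. (2*(z-1)) * (d k * complex_of_real x powr (- (z + of_nat (2 * Suc k))))) sums ((2*(z-1)) *
      ((complex_of_real (real n + (q - 1)) powr (1 - z) - complex_of_real (real n + (q - 1) + 2) powr (1 - z)) / (2 * (z - 1))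
        - complex_of_real (real n + q) powr (- z)))"
      using A unfolding e V .
    then show ?thesis using z1 by (subst (asm) sums_mult_iff) (auto simp: x_def)
  qed
  have q0: "q > 0" and c0: "q - 1 > 0" using q by auto
  have eq: "q - 1 + 1 = q" by simp
  have mm: "\<And>k. 1 \<le> 2 * Suc k" by simp
  from assemble[OF z q0 c0 mm sd per cg]
  show ?thesis unfolding eq cc_def by simp
qed


theorem lemma3p18:
  fixes z :: complex
  assumes "Re z > 0" and "z \<noteq> 1"
  shows "(\<forall>q::real. q > 2 \<longrightarrow>
           summable (\<lambda>k. 2 ^ (Suc k) * Gamma (z + of_nat (Suc k)) / fact (Suc k + 1)
                          * euler_hurwitz_zeta (z + of_nat (Suc k)) q) \<and>
           euler_hurwitz_zeta z q =
             (complex_of_real (q - 2) powr (1 - z) - complex_of_real (q - 1) powr (1 - z))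
               / (2 * (z - 1))
             - (1 / Gamma z) *
               (\<Sum>k. 2 ^ (Suc k) * Gamma (z + of_nat (Suc k)) / fact (Suc k + 1)
                      * euler_hurwitz_zeta (z + of_nat (Suc k)) q))
       \<and> (\<forall>q::real. q > 1 \<longrightarrow>
           summable (\<lambda>k. Gamma (z + of_nat (2 * Suc k)) / fact (2 * Suc k + 1)
                          * euler_hurwitz_zeta (z + of_nat (2 * Suc k)) q) \<and>
           euler_hurwitz_zeta z q =
             (complex_of_real (q - 1) powr (1 - z) - complex_of_real q powr (1 - z))
               / (2 * (z - 1))
             - (1 / Gamma z) *
               (\<Sum>k. Gamma (z + of_nat (2 * Suc k)) / fact (2 * Suc k + 1)
                      * euler_hurwitz_zeta (z + of_nat (2 * Suc k)) q))"
  using case1[OF assms] case2[OF assms] by blast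

end
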